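(* Let $\mathcal A=\mathbb Q[u_0,u_1,u_2,\dots]$ graded by $\deg u_i=i$, and $\partial$ the derivation with $\partial(u_i)=u_{i+1}$. Define $b_k\in\mathcal A$ ($k\ge-1$) by $b_{-1}=1$ and for $k\ge0$ $$b_k=\sum_{\substack{k_1,k_2\ge-1\\k_1+k_2=k-2}}\Bigl[\frac{b_{k_1}\partial^2(b_{k_2})}4-\frac{\partial(b_{k_1})\partial(b_{k_2})}8+u_0b_{k_1}b_{k_2}\Bigr]-\frac12\sum_{\substack{k_1\ge0,\,k_2\ge-1\\k_1+k_2=k-2}}b_{k_1}b_{k_2+1}.$$ Let $D_k$ ($k\ge0$) be the derivation of $\mathcal A$ with $[D_k,\partial]=0$ and $D_k(u_0)=\frac{\partial(b_k)}{(2k+1)!!}$, and set $Q_k=\frac{\partial(b_k)}{(2k+1)!!}-\frac{u_0^k}{k!}u_1$. Then the $D_k$ commute pairwise, $D_0=\partial$, $Q_0=0$, $Q_1=\frac1{12}u_3$, and every $Q_k$ lies in $\mathcal A^{\ge2}$, the span of monomials of degree $\ge2$. *)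

theory Defs
  imports Complex_Main "HOL-Library.Poly_Mapping"
begin

text \<open>The polynomial ring A = Q[u_0,u_1,u_2,...]: a polynomial is a finitely supported
  map from monomials (finitely supported exponent vectors) to rational
  coefficients; multiplication is the convolution product of Poly_Mapping.\<close>

type_synonym poly\<A> = "(nat \<Rightarrow>\<^sub>0 nat) \<Rightarrow>\<^sub>0 rat"

definition cst :: "rat \<Rightarrow> poly\<A>" where
  "cst c = Poly_Mapping.single 0 c"

definition u :: "nat \<Rightarrow> poly\<A>" where
  "u i = Poly_Mapping.single (Poly_Mapping.single i 1) 1"

definition wdeg :: "(nat \<Rightarrow>\<^sub>0 nat) \<Rightarrow> nat" where
  "wdeg m = (\<Sum>i\<in>Poly_Mapping.keys m. i * Poly_Mapping.lookup m i)"

definition in_A_ge2 :: "poly\<A> \<Rightarrow> bool" where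
  "in_A_ge2 p \<longleftrightarrow> (\<forall>m\<in>Poly_Mapping.keys p. 2 \<le> wdeg m)"

definition is_derivation :: "(poly\<A> \<Rightarrow> poly\<A>) \<Rightarrow> bool" where
  "is_derivation D \<longleftrightarrow>
     (\<forall>p q. D (p + q) = D p + D q) \<and>
     (\<forall>c p. D (cst c * p) = cst c * D p) \<and>
     (\<forall>p q. D (p * q) = p * D q + D p * q)"

fun dfact :: "nat \<Rightarrow> nat" where
  "dfact 0 = 1"
| "dfact (Suc 0) = 1"
| "dfact (Suc (Suc n)) = Suc (Suc n) * dfact n"

text \<open>The sequence b_k, k \<ge> -1, stored shifted: bsh d j = b_{j-1}.  With j1 = k1+1,
  j2 = k2+1 the recursion of the paper reads as below.\<close>
fun bsh :: "(poly\<A> \<Rightarrow> poly\<A>) \<Rightarrow> nat \<Rightarrow> poly\<A>" where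
  "bsh d 0 = 1"
| "bsh d (Suc k) =
     (\<Sum>j\<le>k. cst (1/4) * bsh d j * d (d (bsh d (k - j)))
             - cst (1/8) * d (bsh d j) * d (bsh d (k - j))
             + u 0 * bsh d j * bsh d (k - j))
     - cst (1/2) * (\<Sum>j\<in>{1..k}. bsh d j * bsh d (k - j + 1))"

definition b :: "(poly\<A> \<Rightarrow> poly\<A>) \<Rightarrow> int \<Rightarrow> poly\<A>" where
  "b d k = bsh d (nat (k + 1))"

definition Q :: "(poly\<A> \<Rightarrow> poly\<A>) \<Rightarrow> nat \<Rightarrow> poly\<A>" where
  "Q d k = cst (1 / of_nat (dfact (2*k+1))) * d (b d (int k))
           - cst (1 / of_nat (fact k)) * u 0 ^ k * u 1"

end

theory Submission
  imports Defs "HOL-Computational_Algebra.Formal_Power_Series"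
begin


lemma cst_add: "cst x + cst y = cst (x + y)"
  by (simp add: cst_def single_add)
lemma cst_mult: "cst x * cst y = cst (x * y)"
  by (simp add: cst_def mult_single)
lemma cst_0[simp]: "cst 0 = 0" by (simp add: cst_def)
lemma cst_1[simp]: "cst 1 = 1" by (simp add: cst_def)
lemma cst_numeral[simp]: "cst (numeral n) = numeral n" by (simp add: cst_def)
lemma cst_of_nat: "cst (of_nat n) = of_nat n" by (simp add: cst_def)
lemma cst_uminus: "cst (- a) = - cst a" by (simp add: cst_def single_uminus)
lemma cst_diff: "cst x - cst y = cst (x - y)" by (simp add: cst_def single_diff)
lemma cst_sum: "cst (sum f A) = (\<Sum>x\<in>A. cst (f x))"
  by (induction A rule: infinite_finite_induct) (auto simp: cst_add[symmetric])
lemma cst_power: "cst (a ^ n) = cst a ^ n"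
  by (induction n) (auto simp: cst_mult[symmetric])
lemma cst_inv: "a \<noteq> 0 \<Longrightarrow> cst a * cst (1/a) = 1"
  by (simp add: cst_mult)

locale der =
  fixes D :: "poly\<A> \<Rightarrow> poly\<A>"
  assumes isd: "is_derivation D"
begin
lemma add: "D (p + q) = D p + D q" using isd unfolding is_derivation_def by blast
lemma cmul: "D (cst c * p) = cst c * D p" using isd unfolding is_derivation_def by blast
lemma mult: "D (p * q) = p * D q + D p * q" using isd unfolding is_derivation_def by blast
lemma zero[simp]: "D 0 = 0" using add[of 0 0] by simp
lemma uminus: "D (- p) = - D p" using add[of p "-p"] by (simp add: eq_neg_iff_add_eq_0 add.commute)
lemma diff: "D (p - q) = D p - D q" using add[of p "-q"] by (simp add: uminus)
lemma one[simp]: "D 1 = 0" using mult[of 1 1] by simp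
lemma cst[simp]: "D (cst c) = 0" using cmul[of c 1] by simp
lemma sum: "D (sum f A) = (\<Sum>x\<in>A. D (f x))"
  by (induction A rule: infinite_finite_induct) (auto simp: add)
lemma numeral_mult: "D (numeral n * p) = numeral n * D p"
  using cmul[of "numeral n" p] by simp
lemma numeral[simp]: "D (numeral n) = 0"
  using cst[of "numeral n"] by simp
lemma power: "D (p ^ Suc n) = of_nat (Suc n) * p ^ n * D p"
  by (induction n) (auto simp: mult algebra_simps)
end


lemma poly_expand: "p = (\<Sum>m\<in>Poly_Mapping.keys p. Poly_Mapping.single m (Poly_Mapping.lookup p m))"
proof (rule poly_mapping_eqI)
  fix x
  show "Poly_Mapping.lookup p x = Poly_Mapping.lookup (\<Sum>m\<in>Poly_Mapping.keys p. Poly_Mapping.single m (Poly_Mapping.lookup p m)) x"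
    by (cases "x \<in> Poly_Mapping.keys p")
      (auto simp: lookup_sum lookup_single when_def in_keys_iff sum.delta)
qed

lemma single_cst: "Poly_Mapping.single m c = cst c * Poly_Mapping.single m (1::rat)"
  by (simp add: cst_def mult_single)

lemma update_add: "a \<notin> Poly_Mapping.keys (m::nat \<Rightarrow>\<^sub>0 nat) \<Longrightarrow> Poly_Mapping.update a e m = m + Poly_Mapping.single a e"
  by (rule poly_mapping_eqI) (auto simp: lookup_update lookup_add lookup_single when_def in_keys_iff)

lemma single_mono_add: "Poly_Mapping.single (m + n) (1::rat) = Poly_Mapping.single m 1 * Poly_Mapping.single n 1"
  by (simp add: mult_single)

lemma single_u_pow: "Poly_Mapping.single (Poly_Mapping.single a e) (1::rat) = u a ^ e"
proof (induction e)
  case 0 then show ?case by simp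
next
  case (Suc e)
  have "Poly_Mapping.single a (Suc e) = Poly_Mapping.single a 1 + Poly_Mapping.single a e"
    by (simp add: single_add[symmetric])
  then show ?case using Suc by (simp add: single_mono_add u_def)
qed

lemma der_zero_on_u:
  assumes "der E" and "\<And>i. E (u i) = 0"
  shows "E p = 0"
proof -
  interpret der E by fact
  have pw: "E (u a ^ e) = 0" for a e
    by (induction e) (auto simp: mult assms(2))
  have mono: "E (Poly_Mapping.single m 1) = 0" for m
  proof (induction m rule: update_induct)
    case const then show ?case by simp
  next
    case (update f a e)
    then show ?case
      by (simp add: update_add single_mono_add single_u_pow mult pw)
  qed
  have "E p = (\<Sum>m\<in>Poly_Mapping.keys p. E (Poly_Mapping.single m (Poly_Mapping.lookup p m)))"
    by (subst poly_expand) (simp add: sum)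
  also have "\<dots> = 0"
    by (rule sum.neutral) (auto simp: single_cst[of _ "Poly_Mapping.lookup p _"] cmul mono)
  finally show ?thesis .
qed

lemma wdeg_superset: "finite S \<Longrightarrow> Poly_Mapping.keys m \<subseteq> S \<Longrightarrow> wdeg m = (\<Sum>i\<in>S. i * Poly_Mapping.lookup m i)"
  unfolding wdeg_def by (rule sum.mono_neutral_left) (auto simp: in_keys_iff)

lemma wdeg_add: "wdeg (m + n) = wdeg m + wdeg n"
proof -
  let ?S = "Poly_Mapping.keys m \<union> Poly_Mapping.keys n"
  have k: "Poly_Mapping.keys (m + n) \<subseteq> ?S" by (rule keys_add)
  show ?thesis
    by (subst (1 2 3) wdeg_superset[of ?S]) (use k in \<open>auto simp: lookup_add algebra_simps sum.distrib\<close>)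
qed

lemma wdeg_single: "wdeg (Poly_Mapping.single a e) = a * e"
  by (cases "e = 0") (auto simp: wdeg_def)

lemma wdeg_0[simp]: "wdeg 0 = 0" by (simp add: wdeg_def)

definition hom :: "nat \<Rightarrow> poly\<A> \<Rightarrow> bool" where
  "hom w p \<longleftrightarrow> (\<forall>m\<in>Poly_Mapping.keys p. wdeg m = w)"
definition ge :: "nat \<Rightarrow> poly\<A> \<Rightarrow> bool" where
  "ge w p \<longleftrightarrow> (\<forall>m\<in>Poly_Mapping.keys p. w \<le> wdeg m)"

lemma keys_uminus: "Poly_Mapping.keys (- p) = Poly_Mapping.keys (p::poly\<A>)"
  by (auto simp: in_keys_iff)

lemma hom_0[simp]: "hom w 0" by (simp add: hom_def)
lemma hom_add: "hom w p \<Longrightarrow> hom w q \<Longrightarrow> hom w (p + q)"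
  using keys_add[of p q] unfolding hom_def by blast
lemma hom_mult: "hom w p \<Longrightarrow> hom v q \<Longrightarrow> hom (w + v) (p * q)"
  using keys_mult[of p q] unfolding hom_def by (force simp: wdeg_add)
lemma hom_single: "hom (wdeg m) (Poly_Mapping.single m c)"
  by (simp add: hom_def)
lemma hom_u: "hom i (u i)"
  using hom_single[of "Poly_Mapping.single i 1" 1] by (simp add: u_def wdeg_single)
lemma hom_ge: "hom w p \<Longrightarrow> v \<le> w \<Longrightarrow> ge v p"
  unfolding hom_def ge_def by auto

lemma ge_0[simp]: "ge w 0" by (simp add: ge_def)
lemma ge_add: "ge w p \<Longrightarrow> ge w q \<Longrightarrow> ge w (p + q)"
  using keys_add[of p q] unfolding ge_def by blast
lemma ge_uminus: "ge w p \<Longrightarrow> ge w (- p)"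
  unfolding ge_def by (simp add: keys_uminus)
lemma ge_diff: "ge w p \<Longrightarrow> ge w q \<Longrightarrow> ge w (p - q)"
  using ge_add[of w p "-q"] ge_uminus[of w q] by simp
lemma ge_mult: "ge w p \<Longrightarrow> ge v q \<Longrightarrow> ge (w + v) (p * q)"
  using keys_mult[of p q] unfolding ge_def by (force simp: wdeg_add)
lemma ge_zero_any[simp]: "ge 0 p" by (simp add: ge_def)
lemma ge_mult_left: "ge w q \<Longrightarrow> ge w (p * q)"
  using ge_mult[of 0 p w q] by simp
lemma ge_mult_right: "ge w p \<Longrightarrow> ge w (p * q)"
  using ge_mult[of w p 0 q] by simp
lemma ge_sum: "(\<And>x. x \<in> A \<Longrightarrow> ge w (f x)) \<Longrightarrow> ge w (sum f A)"
  by (induction A rule: infinite_finite_induct) (auto intro: ge_add)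

context
  fixes d :: "poly\<A> \<Rightarrow> poly\<A>"
  assumes dd: "der d" and du: "\<And>i. d (u i) = u (Suc i)"
begin

lemma d_u_pow: "hom (a * e + 1) (d (u a ^ e))"
proof (induction e)
  case 0 then show ?case using der.one[OF dd] by simp
next
  case (Suc e)
  have h1: "hom (a * Suc e + 1) (u a * d (u a ^ e))" using hom_mult[OF hom_u Suc] by (simp add: algebra_simps)
  have up: "hom (a * e) (u a ^ e)" using hom_single[of "Poly_Mapping.single a e" 1]
    by (simp add: single_u_pow wdeg_single)
  have h2: "hom (a * Suc e + 1) (u (Suc a) * u a ^ e)" using hom_mult[OF hom_u[of "Suc a"] up] by (simp add: algebra_simps)
  show ?case using hom_add[OF h1 h2]
    by (simp add: der.mult[OF dd] du algebra_simps)
qed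

lemma d_mono: "hom (wdeg m + 1) (d (Poly_Mapping.single m 1))"
proof (induction m rule: update_induct)
  case const then show ?case using der.one[OF dd] by simp
next
  case (update f a e)
  have up: "hom (a * e) (u a ^ e)" using hom_single[of "Poly_Mapping.single a e" 1]
    by (simp add: single_u_pow wdeg_single)
  have h1: "hom (wdeg f + a * e + 1) (Poly_Mapping.single f 1 * d (u a ^ e))"
    using hom_mult[OF hom_single d_u_pow] by (simp add: algebra_simps)
  have h2: "hom (wdeg f + a * e + 1) (d (Poly_Mapping.single f 1) * u a ^ e)"
    using hom_mult[OF update(3) up] by (simp add: algebra_simps)
  show ?case using hom_add[OF h1 h2] update(1)
    by (simp add: update_add single_mono_add single_u_pow der.mult[OF dd] wdeg_add wdeg_single algebra_simps)
qed

lemma d_ge: "ge w p \<Longrightarrow> ge (w + 1) (d p)"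
proof -
  assume g: "ge w p"
  have "d p = (\<Sum>m\<in>Poly_Mapping.keys p. d (Poly_Mapping.single m (Poly_Mapping.lookup p m)))"
    by (subst poly_expand) (simp add: der.sum[OF dd])
  also have "ge (w + 1) \<dots>"
  proof (rule ge_sum)
    fix m assume m: "m \<in> Poly_Mapping.keys p"
    have "ge (w + 1) (d (Poly_Mapping.single m 1))"
      using d_mono[of m] g m unfolding ge_def hom_def by auto
    then show "ge (w + 1) (d (Poly_Mapping.single m (Poly_Mapping.lookup p m)))"
      by (subst single_cst) (simp add: der.cmul[OF dd] ge_mult_left)
  qed
  finally show ?thesis .
qed

lemma d_ge1: "ge 1 (d p)"
  using d_ge[of 0 p] by simp

end


fun Cf :: "nat \<Rightarrow> rat" where
  "Cf 0 = 1"
| "Cf (Suc j) = of_nat (2 * j + 1) / of_nat (j + 1) * Cf j"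

declare Cf.simps(2)[simp del]
declare bsh.simps(2)[simp del]

lemma Cf_step: "of_nat (Suc j) * Cf (Suc j) = of_nat (2 * j + 1) * Cf j"
  by (simp add: Cf.simps(2) del: of_nat_Suc)

lemma Cf_conv: "(\<Sum>j\<le>n. Cf j * Cf (n - j)) = 2 ^ n"
proof -
  define C where "C = Abs_fps Cf"
  have dC: "fps_deriv C - fps_const 2 * (fps_X * fps_deriv C) = C"
  proof (rule fps_ext)
    fix n
    have "fps_nth (fps_deriv C - fps_const 2 * (fps_X * fps_deriv C)) n
       = of_nat (Suc n) * Cf (Suc n) - 2 * (if n = 0 then 0 else of_nat n * Cf n)"
      by (cases n) (simp_all add: C_def del: of_nat_Suc Cf.simps)
    also have "\<dots> = of_nat (2 * n + 1) * Cf n - 2 * (of_nat n * Cf n)"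
      by (simp only: Cf_step) simp
    also have "\<dots> = Cf n"
      by (simp add: algebra_simps del: Cf.simps)
    finally show "fps_nth (fps_deriv C - fps_const 2 * (fps_X * fps_deriv C)) n = fps_nth C n"
      by (simp add: C_def)
  qed
  define F where "F = C * C"
  have dF: "fps_deriv F - fps_const 2 * (fps_X * fps_deriv F) = fps_const 2 * F"
  proof -
    have "fps_deriv F - fps_const 2 * (fps_X * fps_deriv F) = fps_const 2 * C * (fps_deriv C - fps_const 2 * (fps_X * fps_deriv C))"
      by (simp add: F_def algebra_simps numeral_fps_const)
    then show ?thesis using dC by (simp add: F_def)
  qed
  have rec: "fps_nth F (Suc n) = 2 * fps_nth F n" for n
  proof -
    have "fps_nth (fps_deriv F - fps_const 2 * (fps_X * fps_deriv F)) n = fps_nth (fps_const 2 * F) n"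
      using dF by simp
    hence "of_nat (Suc n) * fps_nth F (Suc n) - 2 * (if n = 0 then 0 else of_nat n * fps_nth F n) = 2 * fps_nth F n"
      by (cases n) (simp_all del: of_nat_Suc)
    hence "of_nat (Suc n) * fps_nth F (Suc n) = of_nat (Suc n) * (2 * fps_nth F n)"
      by (cases "n = 0") (simp_all add: algebra_simps)
    then show ?thesis by (metis mult_cancel_left of_nat_eq_0_iff nat.distinct(1))
  qed
  have F0: "fps_nth F 0 = 1" by (simp add: F_def C_def)
  have "fps_nth F n = 2 ^ n" by (induction n) (simp_all add: F0 rec)
  then show ?thesis by (simp add: F_def C_def fps_mult_nth atLeast0AtMost)
qed

lemma Cf_rec: "Cf (Suc k) = (\<Sum>j\<le>k. Cf j * Cf (k - j)) - 1/2 * (\<Sum>j\<in>{1..k}. Cf j * Cf (k - j + 1))"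
proof -
  have split: "(\<Sum>j\<le>Suc k. f j) = f 0 + (\<Sum>j\<in>{1..k}. f j) + f (Suc k)" for f :: "nat \<Rightarrow> rat"
  proof -
    have "{..Suc k} = insert 0 (insert (Suc k) {1..k})" by auto
    then show ?thesis by (simp add: algebra_simps)
  qed
  have "(2::rat) ^ Suc k = Cf (Suc k) + (\<Sum>j\<in>{1..k}. Cf j * Cf (k - j + 1)) + Cf (Suc k)"
    using Cf_conv[of "Suc k"] split[of "\<lambda>j. Cf j * Cf (Suc k - j)"]
    by (simp add: Suc_diff_le)
  moreover have "(\<Sum>j\<le>k. Cf j * Cf (k - j)) = 2 ^ k" by (rule Cf_conv)
  ultimately show ?thesis by (simp add: field_simps)
qed

lemma Cf_closed: "Cf (Suc k) = of_nat (dfact (2 * k + 1)) / of_nat (fact (Suc k))"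
proof (induction k)
  case 0 then show ?case by (simp add: Cf.simps(2))
next
  case (Suc k)
  have e0: "2 * Suc k + 1 = Suc (Suc (2 * k + 1))" by simp
  have e1: "dfact (2 * Suc k + 1) = (2 * k + 3) * dfact (2 * k + 1)"
    unfolding e0 dfact.simps(3) by (simp add: algebra_simps)
  have e2: "(fact (Suc (Suc k)) :: nat) = (k + 2) * fact (Suc k)"
    using fact_Suc[of "Suc k", where 'a=nat] by simp
  have e3: "Cf (Suc (Suc k)) = of_nat (2 * Suc k + 1) / of_nat (Suc k + 1) * Cf (Suc k)"
    by (rule Cf.simps(2))
  have e4: "of_nat (2 * Suc k + 1) / of_nat (Suc k + 1) = (of_nat (2 * k + 3) / of_nat (k + 2) :: rat)"
    by simp
  have "Cf (Suc (Suc k)) = of_nat (2 * k + 3) / of_nat (k + 2) * (of_nat (dfact (2 * k + 1)) / of_nat (fact (Suc k)))"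
    by (simp only: e3 e4 Suc)
  also have "\<dots> = of_nat ((2 * k + 3) * dfact (2 * k + 1)) / of_nat ((k + 2) * fact (Suc k))"
    by (simp only: of_nat_mult times_divide_times_eq)
  finally show ?case by (simp only: e1 e2)
qed

lemma ge1_prod_diff: "ge 1 (p - p') \<Longrightarrow> ge 1 (q - q') \<Longrightarrow> ge 1 (p * q - p' * q')"
proof -
  assume a: "ge 1 (p - p')" "ge 1 (q - q')"
  have "p * q - p' * q' = (p - p') * q + p' * (q - q')" by (simp add: algebra_simps)
  then show ?thesis using a by (simp add: ge_add ge_mult_left ge_mult_right)
qed

context
  fixes d :: "poly\<A> \<Rightarrow> poly\<A>"
  assumes dd: "der d" and du: "\<And>i. d (u i) = u (Suc i)"
begin

abbreviation "Am j \<equiv> cst (Cf j) * u 0 ^ j"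

lemma Am_mult: "j \<le> k \<Longrightarrow> Am j * Am (k - j) = cst (Cf j * Cf (k - j)) * u 0 ^ k"
proof -
  assume "j \<le> k"
  then have "u 0 ^ j * u 0 ^ (k - j) = u 0 ^ k" by (simp add: power_add[symmetric])
  then show ?thesis by (simp add: cst_mult[symmetric] algebra_simps)
qed

lemma bsh_low: "ge 1 (bsh d j - Am j)"
proof (induction j rule: less_induct)
  case (less j)
  show ?case
  proof (cases j)
    case 0 then show ?thesis by simp
  next
    case (Suc k)
    have IH: "ge 1 (bsh d i - Am i)" if "i \<le> k" for i using less Suc that by simp
    define T where "T j = cst (1/4) * bsh d j * d (d (bsh d (k - j)))
             - cst (1/8) * d (bsh d j) * d (bsh d (k - j))
             + u 0 * bsh d j * bsh d (k - j)" for j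
    define S where "S j = bsh d j * bsh d (k - j + 1)" for j
    define M where "M j = u 0 * (Am j * Am (k - j))" for j
    define N where "N j = Am j * Am (k - j + 1)" for j
    have b: "bsh d (Suc k) = (\<Sum>j\<le>k. T j) - cst (1/2) * (\<Sum>j\<in>{1..k}. S j)"
      by (simp only: bsh.simps(2) T_def S_def)
    have gT: "ge 1 (T j - M j)" if "j \<le> k" for j
    proof -
      have "T j - M j = cst (1/4) * bsh d j * d (d (bsh d (k - j)))
             - cst (1/8) * d (bsh d j) * d (bsh d (k - j))
             + u 0 * (bsh d j * bsh d (k - j) - Am j * Am (k - j))"
        by (simp add: T_def M_def algebra_simps)
      moreover have "ge 1 (bsh d j * bsh d (k - j) - Am j * Am (k - j))"
        using IH[of j] IH[of "k - j"] that by (intro ge1_prod_diff) auto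
      ultimately show ?thesis
        using d_ge1[OF dd du] by (auto intro!: ge_add ge_diff ge_mult_left)
    qed
    have gS: "ge 1 (S j - N j)" if "j \<in> {1..k}" for j
      unfolding S_def N_def using IH[of j] IH[of "k - j + 1"] that by (intro ge1_prod_diff) auto
    have sM: "(\<Sum>j\<le>k. M j) = cst (\<Sum>j\<le>k. Cf j * Cf (k - j)) * u 0 ^ Suc k"
    proof -
      have "M j = cst (Cf j * Cf (k - j)) * u 0 ^ Suc k" if "j \<le> k" for j
        using Am_mult[OF that] by (simp add: M_def)
      then show ?thesis by (simp add: cst_sum sum_distrib_right)
    qed
    have sN: "(\<Sum>j\<in>{1..k}. N j) = cst (\<Sum>j\<in>{1..k}. Cf j * Cf (k - j + 1)) * u 0 ^ Suc k"
    proof -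
      have "N j = cst (Cf j * Cf (k - j + 1)) * u 0 ^ Suc k" if "j \<in> {1..k}" for j
        using Am_mult[of j "Suc k"] that by (simp add: N_def Suc_diff_le)
      then show ?thesis by (simp add: cst_sum sum_distrib_right)
    qed
    have main: "(\<Sum>j\<le>k. M j) - cst (1/2) * (\<Sum>j\<in>{1..k}. N j) = Am (Suc k)"
      unfolding sM sN Cf_rec[of k]
      by (simp only: cst_mult[symmetric] cst_diff[symmetric]) (simp add: algebra_simps)
    have "bsh d j - Am j = ((\<Sum>j\<le>k. T j) - (\<Sum>j\<le>k. M j))
          - cst (1/2) * ((\<Sum>j\<in>{1..k}. S j) - (\<Sum>j\<in>{1..k}. N j))"
      unfolding Suc b main[symmetric] by (simp add: algebra_simps)
    also have "ge 1 \<dots>"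
    proof -
      have g1: "ge 1 ((\<Sum>j\<le>k. T j) - (\<Sum>j\<le>k. M j))"
        unfolding sum_subtractf[symmetric] using gT by (intro ge_sum) auto
      have g2: "ge 1 ((\<Sum>j\<in>{1..k}. S j) - (\<Sum>j\<in>{1..k}. N j))"
        unfolding sum_subtractf[symmetric] using gS by (intro ge_sum) auto
      show ?thesis using ge_diff[OF g1 ge_mult_left[OF g2]] .
    qed
    finally show ?thesis .
  qed
qed

end


definition fmap :: "(poly\<A> \<Rightarrow> poly\<A>) \<Rightarrow> poly\<A> fps \<Rightarrow> poly\<A> fps" where
  "fmap f F = Abs_fps (\<lambda>n. f (fps_nth F n))"

lemma fmap_nth[simp]: "fps_nth (fmap f F) n = f (fps_nth F n)"
  by (simp add: fmap_def)

lemma fps_numeral_mult_nth[simp]: "fps_nth (numeral k * F) n = numeral k * fps_nth F n"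
  by (simp add: numeral_fps_const)

definition vanish :: "nat \<Rightarrow> 'a::comm_ring_1 fps \<Rightarrow> bool" where
  "vanish n F \<longleftrightarrow> (\<forall>i<n. fps_nth F i = 0)"

lemma vanish_mult_left: "vanish n F \<Longrightarrow> vanish n (G * F)"
  unfolding vanish_def by (auto simp: fps_mult_nth intro!: sum.neutral)

lemma vanish_mult_right: "vanish n F \<Longrightarrow> vanish n (F * G)"
  using vanish_mult_left[of n F G] by (simp add: mult.commute)

lemma vanish_add: "vanish n F \<Longrightarrow> vanish n G \<Longrightarrow> vanish n (F + G)"
  unfolding vanish_def by auto

lemma vanish_diff: "vanish n F \<Longrightarrow> vanish n G \<Longrightarrow> vanish n (F - G)"
  unfolding vanish_def by auto

lemma vanish_fmap: "vanish n F \<Longrightarrow> der D \<Longrightarrow> vanish n (fmap D F)"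
  unfolding vanish_def by (auto simp: der.zero)

lemma cancel_unit:
  fixes B F :: "'a::comm_ring_1 fps"
  assumes B0: "fps_nth B 0 = 1" and BF: "B * F = 0"
  shows "F = 0"
proof -
  have "fps_nth F n = 0" for n
  proof (induction n rule: less_induct)
    case (less n)
    have "0 = fps_nth (B * F) n" using BF by simp
    also have "\<dots> = (\<Sum>i=0..n. fps_nth B i * fps_nth F (n - i))" by (rule fps_mult_nth)
    also have "\<dots> = fps_nth B 0 * fps_nth F n + (\<Sum>i=Suc 0..n. fps_nth B i * fps_nth F (n - i))"
      by (simp add: sum.atLeast_Suc_atMost)
    also have "(\<Sum>i=Suc 0..n. fps_nth B i * fps_nth F (n - i)) = 0"
      using less by (intro sum.neutral) auto
    finally show ?case using B0 by simp
  qed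
  then show ?thesis by (intro fps_ext) simp
qed

lemma Xpow_cancel:
  fixes F :: "'a::comm_ring_1 fps"
  assumes "fps_X ^ k * F = 0" shows "F = 0"
proof (rule fps_ext)
  fix n
  have "fps_nth (fps_X ^ k * F) (n + k) = fps_nth F n" by (simp add: fps_X_power_mult_nth)
  then show "fps_nth F n = fps_nth 0 n" using assms by simp
qed

context der
begin

lemma fmap_add: "fmap D (F + G) = fmap D F + fmap D G"
  by (rule fps_ext) (simp add: add)
lemma fmap_diff: "fmap D (F - G) = fmap D F - fmap D G"
  by (rule fps_ext) (simp add: diff)
lemma fmap_uminus: "fmap D (- F) = - fmap D F"
  by (rule fps_ext) (simp add: uminus)
lemma fmap_mult: "fmap D (F * G) = F * fmap D G + fmap D F * G"
  by (rule fps_ext) (simp add: fps_mult_nth sum mult sum.distrib)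
lemma fmap_const: "fmap D (fps_const c) = fps_const (D c)"
  by (rule fps_ext) simp
lemma fmap_numeral[simp]: "fmap D (numeral k) = 0"
  by (rule fps_ext) (simp add: fps_numeral_nth)
lemma fmap_one[simp]: "fmap D 1 = 0"
  by (rule fps_ext) simp
lemma fmap_X[simp]: "fmap D fps_X = 0"
  by (rule fps_ext) simp
lemma fmap_Xpow[simp]: "fmap D (fps_X ^ k) = 0"
  by (rule fps_ext) simp
lemma fmap_numeral_mult: "fmap D (numeral k * F) = numeral k * fmap D F"
  by (simp add: fmap_mult)
lemma fmap_X_mult: "fmap D (fps_X * F) = fps_X * fmap D F"
  by (simp add: fmap_mult)
lemma fmap_Xpow_mult: "fmap D (fps_X ^ k * F) = fps_X ^ k * fmap D F"
  by (simp add: fmap_mult)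

end

lemma fmap_comm: "(\<And>p. D1 (D2 p) = D2 (D1 p)) \<Longrightarrow> fmap D1 (fmap D2 F) = fmap D2 (fmap D1 F)"
  by (rule fps_ext) simp


declare bsh.simps(2)[simp del]

lemma eight_quarter: "(8::poly\<A>) * (cst (1/4) * x - cst (1/8) * y + z) = 2 * x - y + 8 * z"
proof -
  have a: "(8::poly\<A>) * cst (1/4) = 2" using cst_mult[of 8 "1/4"] by simp
  have b: "(8::poly\<A>) * cst (1/8) = 1" using cst_mult[of 8 "1/8"] by simp
  have "(8::poly\<A>) * (cst (1/4) * x - cst (1/8) * y + z) = (8 * cst (1/4)) * x - (8 * cst (1/8)) * y + 8 * z"
    by (simp add: algebra_simps)
  then show ?thesis by (simp only: a b) simp
qed

lemma eight_q1: "(8::poly\<A>) * (cst (1/4) * x) = 2 * x"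
proof -
  have a: "(8::poly\<A>) * cst (1/4) = 2" using cst_mult[of 8 "1/4"] by simp
  show ?thesis by (simp add: mult.assoc[symmetric] a)
qed

lemma eight_q2: "(8::poly\<A>) * (cst (1/8) * x) = x"
proof -
  have a: "(8::poly\<A>) * cst (1/8) = 1" using cst_mult[of 8 "1/8"] by simp
  show ?thesis by (simp add: mult.assoc[symmetric] a)
qed

lemma eight_half: "(8::poly\<A>) * (cst (1/2) * x) = 4 * x"
proof -
  have a: "(8::poly\<A>) * cst (1/2) = 4" using cst_mult[of 8 "1/2"] by simp
  show ?thesis by (simp add: mult.assoc[symmetric] a)
qed

context
  fixes d :: "poly\<A> \<Rightarrow> poly\<A>"
  assumes dd: "der d" and du: "\<And>i. d (u i) = u (Suc i)"
begin

abbreviation "B \<equiv> Abs_fps (bsh d)"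
abbreviation "Dz \<equiv> fmap d"
abbreviation "U \<equiv> fps_const (u 0)"
abbreviation "U1 \<equiv> fps_const (u 1)"

lemma bsh_0: "bsh d 0 = 1" by simp

lemma E_eq: "fps_X * (2 * (B * Dz (Dz B)) - Dz B * Dz B + 8 * (U * (B * B))) = 4 * (B * B) - 4"
proof (rule fps_ext)
  fix n
  show "fps_nth (fps_X * (2 * (B * Dz (Dz B)) - Dz B * Dz B + 8 * (U * (B * B)))) n = fps_nth (4 * (B * B) - 4) n"
  proof (cases n)
    case 0 then show ?thesis by (simp add: fps_numeral_nth)
  next
    case (Suc m)
    define T where "T j = cst (1/4) * bsh d j * d (d (bsh d (m - j)))
             - cst (1/8) * d (bsh d j) * d (bsh d (m - j))
             + u 0 * bsh d j * bsh d (m - j)" for j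
    define S where "S = (\<Sum>j\<in>{1..m}. bsh d j * bsh d (m - j + 1))"
    have b: "bsh d (Suc m) = (\<Sum>j\<le>m. T j) - cst (1/2) * S"
      by (simp only: bsh.simps(2) T_def S_def)
    have b8: "8 * bsh d (Suc m) = (\<Sum>j\<le>m. 2 * (bsh d j * d (d (bsh d (m - j))))
             - d (bsh d j) * d (bsh d (m - j)) + 8 * (u 0 * (bsh d j * bsh d (m - j)))) - 4 * S"
    proof -
      have "8 * bsh d (Suc m) = (\<Sum>j\<le>m. 8 * T j) - 8 * (cst (1/2) * S)"
        by (simp add: b right_diff_distrib sum_distrib_left)
      also have "\<dots> = (\<Sum>j\<le>m. 2 * (bsh d j * d (d (bsh d (m - j))))
             - d (bsh d j) * d (bsh d (m - j)) + 8 * (u 0 * (bsh d j * bsh d (m - j)))) - 4 * S"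
        unfolding eight_half T_def
        by (intro arg_cong2[where f="(-)"] sum.cong refl) (simp add: distrib_left right_diff_distrib mult.assoc eight_q1 eight_q2)
      finally show ?thesis .
    qed
    have split: "(\<Sum>i=0..Suc m. bsh d i * bsh d (Suc m - i)) = 2 * bsh d (Suc m) + S"
    proof -
      have "{0..Suc m} = insert 0 (insert (Suc m) {1..m})" by auto
      then have "(\<Sum>i=0..Suc m. bsh d i * bsh d (Suc m - i))
          = bsh d 0 * bsh d (Suc m) + bsh d (Suc m) * bsh d 0 + (\<Sum>i=1..m. bsh d i * bsh d (Suc m - i))"
        by (simp add: algebra_simps)
      also have "(\<Sum>i=1..m. bsh d i * bsh d (Suc m - i)) = S"
        unfolding S_def by (intro sum.cong refl) (simp add: Suc_diff_le)
      finally show ?thesis by simp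
    qed
    have "fps_nth (fps_X * (2 * (B * Dz (Dz B)) - Dz B * Dz B + 8 * (U * (B * B)))) n
        = (\<Sum>j\<le>m. 2 * (bsh d j * d (d (bsh d (m - j))))
             - d (bsh d j) * d (bsh d (m - j)) + 8 * (u 0 * (bsh d j * bsh d (m - j))))"
      using Suc by (simp add: fps_mult_nth[of "Abs_fps (bsh d)"] fps_mult_nth[of "fmap d (Abs_fps (bsh d))"]
          atLeast0AtMost sum_distrib_left sum_subtractf sum.distrib)
    also have "\<dots> = 8 * bsh d (Suc m) + 4 * S" using b8 by simp
    also have "\<dots> = 4 * fps_nth (B * B) (Suc m)"
      using split by (simp add: fps_mult_nth[of "Abs_fps (bsh d)"] algebra_simps)
    also have "\<dots> = fps_nth (4 * (B * B) - 4) n"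
      using Suc by (simp add: fps_numeral_nth)
    finally show ?thesis .
  qed
qed

lemmas fm = der.fmap_mult[OF dd] der.fmap_add[OF dd] der.fmap_diff[OF dd] der.fmap_const[OF dd]
  der.fmap_uminus[OF dd] der.fmap_numeral[OF dd] der.fmap_X[OF dd] der.fmap_one[OF dd] der.fmap_Xpow[OF dd]

lemma Lenard: "fps_X * (2 * Dz (Dz (Dz B)) + 8 * (U1 * B) + 16 * (U * Dz B)) = 8 * Dz B"
proof -
  have E1: "fps_X * (2 * (Dz B * Dz (Dz B) + B * Dz (Dz (Dz B))) - (Dz B * Dz (Dz B) + Dz (Dz B) * Dz B)
      + 8 * (U * (B * Dz B + Dz B * B) + U1 * (B * B))) = 4 * (B * Dz B + Dz B * B)"
    using arg_cong[OF E_eq, of Dz] by (simp add: fm du der.fmap_X_mult[OF dd])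
  have "B * (fps_X * (2 * Dz (Dz (Dz B)) + 8 * (U1 * B) + 16 * (U * Dz B)) - 8 * Dz B)
     = fps_X * (2 * (Dz B * Dz (Dz B) + B * Dz (Dz (Dz B))) - (Dz B * Dz (Dz B) + Dz (Dz B) * Dz B)
      + 8 * (U * (B * Dz B + Dz B * B) + U1 * (B * B))) - 4 * (B * Dz B + Dz B * B)"
    by (simp add: algebra_simps)
  also have "\<dots> = 0" using E1 by simp
  finally have "B * (fps_X * (2 * Dz (Dz (Dz B)) + 8 * (U1 * B) + 16 * (U * Dz B)) - 8 * Dz B) = 0" .
  then have "fps_X * (2 * Dz (Dz (Dz B)) + 8 * (U1 * B) + 16 * (U * Dz B)) - 8 * Dz B = 0"
    by (rule cancel_unit[rotated]) simp
  then show ?thesis by simp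
qed

lemma Lenard_coeff: "2 * d (d (d (bsh d m))) + 8 * (u 1 * bsh d m) + 16 * (u 0 * d (bsh d m)) = 8 * d (bsh d (Suc m))"
proof -
  have "fps_nth (fps_X * (2 * Dz (Dz (Dz B)) + 8 * (U1 * B) + 16 * (U * Dz B))) (Suc m) = fps_nth (8 * Dz B) (Suc m)"
    using Lenard by simp
  then show ?thesis by simp
qed

definition Lin :: "poly\<A> fps \<Rightarrow> poly\<A> fps" where
  "Lin Y = 2 * (Y * Dz (Dz B)) + 2 * (B * Dz (Dz Y)) - 2 * (Dz B * Dz Y) + 16 * (U * (B * Y))"

definition EQ :: "poly\<A> fps \<Rightarrow> poly\<A> fps \<Rightarrow> bool" where
  "EQ V Y \<longleftrightarrow> fps_X * (Lin Y + 8 * (V * (B * B))) = 8 * (B * Y)"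

lemma flow_EQ:
  assumes X: "der X" and comm: "\<And>p. X (d p) = d (X p)"
  shows "EQ (fps_const (X (u 0))) (fmap X B)"
proof -
  let ?V = "fps_const (X (u 0))" and ?Y = "fmap X B"
  note fx = der.fmap_mult[OF X] der.fmap_add[OF X] der.fmap_diff[OF X] der.fmap_const[OF X]
    der.fmap_numeral[OF X] der.fmap_X[OF X] der.fmap_one[OF X] fmap_comm[of X d, OF comm]
  have E1: "fps_X * (2 * (?Y * Dz (Dz B) + B * Dz (Dz ?Y)) - (Dz ?Y * Dz B + Dz B * Dz ?Y)
      + 8 * (?V * (B * B) + U * (?Y * B + B * ?Y))) = 4 * (?Y * B + B * ?Y)"
    using arg_cong[OF E_eq, of "fmap X"] by (simp add: fx der.fmap_X_mult[OF X] algebra_simps)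
  show ?thesis unfolding EQ_def Lin_def using E1 by (simp add: algebra_simps)
qed

lemma EQ_unique:
  assumes 1: "EQ V Y1" and 2: "EQ V Y2" shows "Y1 = Y2"
proof -
  define Dl where "Dl = Y1 - Y2"
  have LinD: "Lin Dl = Lin Y1 - Lin Y2"
    unfolding Lin_def Dl_def by (simp add: fm algebra_simps)
  have eq: "fps_X * Lin Dl = 8 * (B * Dl)"
  proof -
    have "fps_X * (Lin Y1 + 8 * (V * (B * B))) - fps_X * (Lin Y2 + 8 * (V * (B * B)))
        = 8 * (B * Y1) - 8 * (B * Y2)"
      using 1 2 unfolding EQ_def by simp
    then have "fps_X * (Lin Y1 - Lin Y2) = 8 * (B * (Y1 - Y2))"
      by (simp add: algebra_simps)
    then show ?thesis unfolding LinD by (simp add: Dl_def)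
  qed
  have "vanish n Dl" for n
  proof (induction n)
    case 0 then show ?case by (simp add: vanish_def)
  next
    case (Suc n)
    have vD: "vanish n (Dz Dl)" "vanish n (Dz (Dz Dl))"
      using Suc by (auto intro: vanish_fmap dd)
    have "vanish n (Lin Dl)"
      unfolding Lin_def using Suc vD
      by (intro vanish_add vanish_diff vanish_mult_left vanish_mult_right) 
    then have l: "fps_nth (fps_X * Lin Dl) n = 0"
      by (cases n) (auto simp: vanish_def)
    have "fps_nth (B * Dl) n = (\<Sum>i=0..n. fps_nth B i * fps_nth Dl (n - i))" by (rule fps_mult_nth)
    also have "\<dots> = fps_nth B 0 * fps_nth Dl n + (\<Sum>i=Suc 0..n. fps_nth B i * fps_nth Dl (n - i))"
      by (simp add: sum.atLeast_Suc_atMost)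
    also have "(\<Sum>i=Suc 0..n. fps_nth B i * fps_nth Dl (n - i)) = 0"
      using Suc by (intro sum.neutral) (auto simp: vanish_def)
    finally have "fps_nth (B * Dl) n = fps_nth Dl n" by simp
    then have "8 * fps_nth Dl n = 0" using l eq by (metis fps_numeral_mult_nth)
    then have "cst (1/8) * (8 * fps_nth Dl n) = 0" by simp
    then have "fps_nth Dl n = 0" by (simp add: mult.assoc[symmetric] cst_mult[of "1/8" 8, simplified])
    then show ?case using Suc by (auto simp: vanish_def less_Suc_eq)
  qed
  then have "Dl = 0" by (intro fps_ext) (auto simp: vanish_def)
  then show ?thesis by (simp add: Dl_def)
qed

definition Pk :: "nat \<Rightarrow> poly\<A> fps" where
  "Pk k = Abs_fps (\<lambda>j. if j \<le> k then bsh d j else 0)"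

definition Mk :: "nat \<Rightarrow> poly\<A> fps" where
  "Mk k = Dz B * Pk k - B * Dz (Pk k)"

lemma Lenard_P: "fps_X * (2 * Dz (Dz (Dz (Pk k))) + 8 * (U1 * Pk k) + 16 * (U * Dz (Pk k)))
   = 8 * Dz (Pk k) + 8 * (fps_X ^ Suc k * fps_const (d (bsh d (Suc k))))"
proof (rule fps_ext)
  fix n
  have d0: "d (bsh d 0) = 0" using der.one[OF dd] by simp
  show "fps_nth (fps_X * (2 * Dz (Dz (Dz (Pk k))) + 8 * (U1 * Pk k) + 16 * (U * Dz (Pk k)))) n
     = fps_nth (8 * Dz (Pk k) + 8 * (fps_X ^ Suc k * fps_const (d (bsh d (Suc k))))) n"
  proof (cases n)
    case 0 then show ?thesis by (simp add: Pk_def d0 fps_X_power_mult_nth der.one[OF dd])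
  next
    case (Suc m)
    then show ?thesis
      using Lenard_coeff[of m]
      by (cases "m < k"; cases "m = k") (auto simp: Pk_def fps_X_power_mult_nth der.zero[OF dd])
  qed
qed

lemma Mk_vanish: "vanish (Suc k) (Mk k)"
proof -
  define T where "T = B - Pk k"
  have vT: "vanish (Suc k) T" by (simp add: vanish_def T_def Pk_def)
  have "Mk k = B * Dz T - Dz B * T"
    unfolding Mk_def T_def by (simp add: fm algebra_simps)
  also have "vanish (Suc k) \<dots>"
    using vT by (intro vanish_diff vanish_mult_left vanish_mult_right vanish_fmap dd)
  finally show ?thesis .
qed

lemma Mk_shift: "fps_X ^ k * fps_shift k (Mk k) = Mk k"
proof (rule fps_ext)
  fix n
  show "fps_nth (fps_X ^ k * fps_shift k (Mk k)) n = fps_nth (Mk k) n"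
    using Mk_vanish[of k] by (auto simp: fps_X_power_mult_nth vanish_def)
qed

lemma Mk_key: "fps_X * (Lin (Mk k) + 8 * (fps_X ^ k * (fps_const (d (bsh d (Suc k))) * (B * B)))) = 8 * (B * Mk k)"
proof -
  let ?P = "Pk k" and ?V = "fps_const (d (bsh d (Suc k)))"
  have DM: "Dz (Mk k) = Dz (Dz B) * ?P - B * Dz (Dz ?P)"
    unfolding Mk_def by (simp add: fm algebra_simps)
  have DDM: "Dz (Dz (Mk k)) = Dz (Dz (Dz B)) * ?P + Dz (Dz B) * Dz ?P - Dz B * Dz (Dz ?P) - B * Dz (Dz (Dz ?P))"
    unfolding DM by (simp add: fm algebra_simps)
  define L1 where "L1 = fps_X * (2 * Dz (Dz (Dz B)) + 8 * (U1 * B) + 16 * (U * Dz B)) - 8 * Dz B"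
  define L2 where "L2 = fps_X * (2 * Dz (Dz (Dz ?P)) + 8 * (U1 * ?P) + 16 * (U * Dz ?P))
     - (8 * Dz ?P + 8 * (fps_X ^ Suc k * ?V))"
  have L1: "L1 = 0" unfolding L1_def using Lenard by simp
  have L2: "L2 = 0" unfolding L2_def using Lenard_P by simp
  have "fps_X * (Lin (Mk k) + 8 * (fps_X ^ k * (?V * (B * B)))) - 8 * (B * Mk k)
      = (B * ?P) * L1 - (B * B) * L2"
    unfolding Lin_def DDM unfolding DM L1_def L2_def by (simp add: Mk_def algebra_simps power_Suc)
  then show ?thesis using L1 L2 by simp
qed

lemma Lin_Xpow: "Lin (fps_X ^ k * Y) = fps_X ^ k * Lin Y"
  unfolding Lin_def der.fmap_Xpow_mult[OF dd] by (simp add: algebra_simps)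

lemma Yk_EQ: "EQ (fps_const (d (bsh d (Suc k)))) (fps_shift k (Mk k))"
proof -
  let ?Y = "fps_shift k (Mk k)" and ?V = "fps_const (d (bsh d (Suc k)))"
  have "fps_X ^ k * (fps_X * (Lin ?Y + 8 * (?V * (B * B))) - 8 * (B * ?Y))
      = fps_X * (Lin (fps_X ^ k * ?Y) + 8 * (fps_X ^ k * (?V * (B * B)))) - 8 * (B * (fps_X ^ k * ?Y))"
    by (simp add: Lin_Xpow algebra_simps)
  also have "\<dots> = 0" unfolding Mk_shift using Mk_key by simp
  finally have "fps_X * (Lin ?Y + 8 * (?V * (B * B))) - 8 * (B * ?Y) = 0" by (rule Xpow_cancel)
  then show ?thesis unfolding EQ_def by simp
qed

lemma flow_bsh:
  assumes X: "der X" and comm: "\<And>p. X (d p) = d (X p)" and X0: "X (u 0) = d (bsh d (Suc k))"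
  shows "X (bsh d l) = fps_nth (Mk k) (l + k)"
proof -
  have "fmap X B = fps_shift k (Mk k)"
    using EQ_unique[OF flow_EQ[OF X comm, unfolded X0] Yk_EQ[of k]] .
  then have "fps_nth (fmap X B) l = fps_nth (fps_shift k (Mk k)) l" by simp
  then show ?thesis by simp
qed

end


context
  fixes d :: "poly\<A> \<Rightarrow> poly\<A>"
  assumes dd: "der d" and du: "\<And>i. d (u i) = u (Suc i)"
begin

lemma half_double: "cst (1/2) * (x + x) = x"
proof -
  have h: "cst (1/2) * 2 = (1::poly\<A>)" using cst_mult[of "1/2" 2] by simp
  have "cst (1/2) * (x + x) = (cst (1/2) * 2) * x" by (simp only: mult_2[symmetric] mult.assoc)
  then show ?thesis using h by simp
qed

definition qq :: "nat \<Rightarrow> nat \<Rightarrow> poly\<A>" where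
  "qq n i = d (bsh d i) * bsh d (n - i) - bsh d i * d (bsh d (n - i))"

lemma Mk_nth: "fps_nth (Mk d k) n = (\<Sum>i=0..n. if n - i \<le> k then qq n i else 0)"
proof -
  have "fps_nth (Mk d k) n = (\<Sum>i=0..n. d (bsh d i) * fps_nth (Pk d k) (n - i) - bsh d i * d (fps_nth (Pk d k) (n - i)))"
    unfolding Mk_def[OF dd du] by (simp add: fps_mult_nth[of "fmap d (Abs_fps (bsh d))"] fps_mult_nth[of "Abs_fps (bsh d)"] sum_subtractf)
  also have "\<dots> = (\<Sum>i=0..n. if n - i \<le> k then qq n i else 0)"
    by (intro sum.cong refl) (simp add: Pk_def[OF dd du] qq_def der.zero[OF dd])
  finally show ?thesis .
qed

lemma Mk_nth': "k \<le> n \<Longrightarrow> fps_nth (Mk d k) n = (\<Sum>i=n-k..n. qq n i)"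
proof -
  assume kn: "k \<le> n"
  have "fps_nth (Mk d k) n = sum (qq n) ({0..n} \<inter> {i. n - i \<le> k})"
    unfolding Mk_nth by (simp add: sum.If_cases)
  also have "{0..n} \<inter> {i. n - i \<le> k} = {n-k..n}" using kn by auto
  finally show ?thesis .
qed

lemma qq_anti: "i \<le> n \<Longrightarrow> qq n (n - i) = - qq n i"
  unfolding qq_def by (simp add: algebra_simps)

lemma qq_total: "(\<Sum>i=0..n. qq n i) = 0"
proof -
  let ?S = "\<Sum>i=0..n. qq n i"
  have "?S = (\<Sum>i=0..n. qq n (n - i))"
    by (rule sum.reindex_bij_witness[where i="\<lambda>i. n - i" and j="\<lambda>i. n - i"]) auto
  also have "\<dots> = - ?S" by (simp add: qq_anti sum_negf)
  finally have "?S + ?S = 0" by (simp add: eq_neg_iff_add_eq_0)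
  then show ?thesis using half_double[of ?S] by simp
qed

lemma qq_reflect: "k + Suc l = n \<Longrightarrow> (\<Sum>i=Suc l..n. qq n i) = - (\<Sum>i=0..k. qq n i)"
proof -
  assume n: "k + Suc l = n"
  have "(\<Sum>i=Suc l..n. qq n i) = (\<Sum>i=0..k. qq n (n - i))"
    by (rule sum.reindex_bij_witness[where i="\<lambda>i. n - i" and j="\<lambda>i. n - i"]) (use n in auto)
  also have "\<dots> = - (\<Sum>i=0..k. qq n i)" using n by (simp add: qq_anti sum_negf)
  finally show ?thesis .
qed

lemma Mk_sym: "fps_nth (Mk d k) (Suc l + k) = fps_nth (Mk d l) (Suc k + l)"
proof -
  define n where "n = Suc l + k"
  have n2: "Suc k + l = n" by (simp add: n_def)
  have a: "fps_nth (Mk d k) n = (\<Sum>i=Suc l..n. qq n i)"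
    using Mk_nth'[of k n] by (simp add: n_def)
  have b: "fps_nth (Mk d l) n = (\<Sum>i=Suc k..n. qq n i)"
    using Mk_nth'[of l n] by (simp add: n_def)
  have split: "(\<Sum>i=0..n. qq n i) = (\<Sum>i=0..k. qq n i) + (\<Sum>i=Suc k..n. qq n i)"
  proof -
    have "{0..n} = {0..k} \<union> {Suc k..n}" by (auto simp: n_def)
    then show ?thesis by (simp add: sum.union_disjoint)
  qed
  have "(\<Sum>i=Suc k..n. qq n i) = - (\<Sum>i=0..k. qq n i)"
    using split qq_total[of n] by (simp add: eq_neg_iff_add_eq_0 add.commute)
  then have e: "fps_nth (Mk d k) n = fps_nth (Mk d l) n"
    using a b qq_reflect[of k l n] n2 by (simp add: n_def)
  have c: "Suc k + l = Suc l + k" by simp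
  show ?thesis using e unfolding n_def c .
qed

end


lemma dfact_pos: "dfact n > 0"
  by (induction n rule: dfact.induct) auto

lemma cst_inv_mult: "c \<noteq> 0 \<Longrightarrow> cst c * (cst (1 / c) * x) = x"
  by (simp add: mult.assoc[symmetric] cst_mult)

lemma cst_inv_mult': "c \<noteq> 0 \<Longrightarrow> cst (1 / c) * (cst c * x) = x"
  by (simp add: mult.assoc[symmetric] cst_mult)

lemma bsh_1: "der d \<Longrightarrow> bsh d 1 = u 0"
proof -
  assume dd: "der d"
  have "bsh d (Suc 0) = (\<Sum>j\<le>0. cst (1/4) * bsh d j * d (d (bsh d (0 - j)))
             - cst (1/8) * d (bsh d j) * d (bsh d (0 - j))
             + u 0 * bsh d j * bsh d (0 - j))
     - cst (1/2) * (\<Sum>j\<in>{1..0}. bsh d j * bsh d (0 - j + 1))"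
    by (rule bsh.simps(2))
  also have "\<dots> = cst (1/4) * d (d 1) - cst (1/8) * d 1 * d 1 + u 0" by simp
  finally show ?thesis using der.one[OF dd] der.zero[OF dd] by simp
qed

theorem corollary2p8:
  fixes d :: "poly\<A> \<Rightarrow> poly\<A>" and D :: "nat \<Rightarrow> poly\<A> \<Rightarrow> poly\<A>"
  assumes d_der: "is_derivation d"
    and d_u: "\<And>i. d (u i) = u (Suc i)"
    and D_der: "\<And>k. is_derivation (D k)"
    and D_comm: "\<And>k p. D k (d p) = d (D k p)"
    and D_u0: "\<And>k. D k (u 0) = cst (1 / of_nat (dfact (2*k+1))) * d (b d (int k))"
  shows "(\<forall>k l p. D k (D l p) = D l (D k p))
         \<and> D 0 = d
         \<and> Q d 0 = 0
         \<and> Q d 1 = cst (1/12) * u 3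
         \<and> (\<forall>k. in_A_ge2 (Q d k))"
proof -
  have dd: "der d" using d_der by (simp add: der_def)
  have Dd: "der (D k)" for k using D_der by (simp add: der_def)
  define c where "c k = (of_nat (dfact (2*k+1)) :: rat)" for k
  have c0: "c k \<noteq> 0" for k using dfact_pos[of "2*k+1"] by (simp add: c_def)
  have bk: "b d (int k) = bsh d (Suc k)" for k
  proof -
    have "nat (int k + 1) = Suc k" by simp
    then show ?thesis by (simp only: b_def)
  qed
  have Du: "D k (u 0) = cst (1 / c k) * d (bsh d (Suc k))" for k
    unfolding c_def bk[symmetric] by (rule D_u0)
  define X where "X k p = cst (c k) * D k p" for k p
  have Xd: "der (X k)" for k
    unfolding der_def is_derivation_def X_def
    using der.add[OF Dd] der.cmul[OF Dd] der.mult[OF Dd] by (simp add: algebra_simps)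
  have Xc: "X k (d p) = d (X k p)" for k p
    by (simp add: X_def D_comm der.cmul[OF dd])
  have X0: "X k (u 0) = d (bsh d (Suc k))" for k
    by (simp add: X_def Du cst_inv_mult c0)
  have DX: "D k p = cst (1 / c k) * X k p" for k p
    by (simp add: X_def cst_inv_mult' c0)
  have Xsym: "X k (bsh d (Suc l)) = X l (bsh d (Suc k))" for k l
    using flow_bsh[OF dd d_u Xd Xc X0, of k "Suc l"] flow_bsh[OF dd d_u Xd Xc X0, of l "Suc k"]
      Mk_sym[OF dd d_u, of k l] by simp
  have comm: "D k (D l p) = D l (D k p)" for k l p
  proof -
    define E where "E p = D k (D l p) - D l (D k p)" for p
    have Ed: "der E"
      unfolding der_def is_derivation_def E_def
    proof (intro conjI allI)
      fix p q :: poly\<A> and cc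
      show "D k (D l (p + q)) - D l (D k (p + q)) = D k (D l p) - D l (D k p) + (D k (D l q) - D l (D k q))"
        by (simp add: der.add[OF Dd])
      show "D k (D l (cst cc * p)) - D l (D k (cst cc * p)) = cst cc * (D k (D l p) - D l (D k p))"
        by (simp add: der.cmul[OF Dd] right_diff_distrib)
      show "D k (D l (p * q)) - D l (D k (p * q)) = p * (D k (D l q) - D l (D k q)) + (D k (D l p) - D l (D k p)) * q"
        by (simp add: der.mult[OF Dd] der.add[OF Dd] algebra_simps)
    qed
    have E0: "E (u 0) = 0"
    proof -
      have "D k (D l (u 0)) = cst (1 / c l) * (cst (1 / c k) * d (X k (bsh d (Suc l))))"
        by (simp add: Du der.cmul[OF Dd] der.cmul[OF dd] D_comm DX[of k])
      moreover have "D l (D k (u 0)) = cst (1 / c k) * (cst (1 / c l) * d (X l (bsh d (Suc k))))"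
        by (simp add: Du der.cmul[OF Dd] der.cmul[OF dd] D_comm DX[of l])
      ultimately show ?thesis unfolding E_def Xsym[of k l] by (simp add: algebra_simps)
    qed
    have Ei: "E (u i) = 0" for i
    proof (induction i)
      case 0 then show ?case by (rule E0)
    next
      case (Suc i)
      have "E (u (Suc i)) = d (E (u i))"
        by (simp add: E_def d_u[symmetric] D_comm der.diff[OF dd])
      then show ?case using Suc by (simp add: der.zero[OF dd])
    qed
    show ?thesis using der_zero_on_u[OF Ed Ei, of p] by (simp add: E_def)
  qed
  have D0: "D 0 = d"
  proof -
    define E where "E p = D 0 p - d p" for p
    have Ed: "der E"
      unfolding der_def is_derivation_def E_def
    proof (intro conjI allI)
      fix p q :: poly\<A> and cc
      show "D 0 (p + q) - d (p + q) = D 0 p - d p + (D 0 q - d q)"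
        by (simp add: der.add[OF Dd] der.add[OF dd])
      show "D 0 (cst cc * p) - d (cst cc * p) = cst cc * (D 0 p - d p)"
        by (simp add: der.cmul[OF Dd] der.cmul[OF dd] right_diff_distrib)
      show "D 0 (p * q) - d (p * q) = p * (D 0 q - d q) + (D 0 p - d p) * q"
        by (simp add: der.mult[OF Dd] der.mult[OF dd] algebra_simps)
    qed
    have Ei: "E (u i) = 0" for i
    proof (induction i)
      case 0 then show ?case by (simp add: E_def Du c_def bsh_1[OF dd] bsh_1[OF dd, simplified] d_u)
    next
      case (Suc i)
      have "E (u (Suc i)) = d (E (u i))"
        by (simp add: E_def d_u[symmetric] D_comm der.diff[OF dd])
      then show ?case using Suc by (simp add: der.zero[OF dd])
    qed
    show ?thesis using der_zero_on_u[OF Ed Ei] by (auto simp: E_def fun_eq_iff)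
  qed
  have Q0: "Q d 0 = 0"
    using bk[of 0] by (simp add: Q_def bsh_1[OF dd] bsh_1[OF dd, simplified] d_u)
  have Q1: "Q d 1 = cst (1/12) * u 3"
  proof -
    have d1: "d 1 = 0" by (rule der.one[OF dd])
    have b1: "bsh d (Suc 0) = u 0" using bsh_1[OF dd] by simp
    have "bsh d (Suc 1) = (\<Sum>j\<le>1. cst (1/4) * bsh d j * d (d (bsh d (1 - j)))
             - cst (1/8) * d (bsh d j) * d (bsh d (1 - j))
             + u 0 * bsh d j * bsh d (1 - j))
       - cst (1/2) * (\<Sum>j\<in>{1..1}. bsh d j * bsh d (1 - j + 1))"
      by (rule bsh.simps(2))
    also have "\<dots> = cst (1/4) * u 2 + (u 0 * u 0 + u 0 * u 0 - cst (1/2) * (u 0 * u 0))"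
      by (simp add: b1 d1 d_u der.zero[OF dd] numeral_2_eq_2 algebra_simps)
    also have "u 0 * u 0 + u 0 * u 0 - cst (1/2) * (u 0 * u 0) = cst (3/2) * (u 0 * u 0)"
    proof -
      have e: "cst (3/2) = 2 - cst (1/2)" using cst_diff[of 2 "1/2"] by simp
      show ?thesis by (simp only: e left_diff_distrib mult_2)
    qed
    finally have b2: "bsh d 2 = cst (1/4) * u 2 + cst (3/2) * (u 0 * u 0)" by (simp add: numeral_2_eq_2)
    have db2: "d (bsh d 2) = cst (1/4) * u 3 + cst 3 * (u 0 * u 1)"
    proof -
      have "d (bsh d 2) = cst (1/4) * u 3 + cst (3/2) * (u 0 * u 1 + u 1 * u 0)"
        unfolding b2 by (simp add: der.add[OF dd] der.cmul[OF dd] der.mult[OF dd] der.cst[OF dd] d_u)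
      also have "cst (3/2) * (u 0 * u 1 + u 1 * u 0) = cst 3 * (u 0 * u 1)"
      proof -
        have "cst (3/2) * (u 0 * u 1 + u 1 * u 0) = (cst (3/2) * 2) * (u 0 * u 1)"
          by (simp only: mult.commute[of "u 1" "u 0"] mult_2[symmetric] mult.assoc)
        also have "cst (3/2) * 2 = cst 3" using cst_mult[of "3/2" 2] by simp
        finally show ?thesis .
      qed
      finally show ?thesis .
    qed
    have df3: "dfact (2 * 1 + 1) = 3" by (simp add: numeral_3_eq_3)
    have bi: "b d (int 1) = bsh d 2" using bk[of 1] by (simp add: numeral_2_eq_2)
    have "Q d 1 = cst (1/3) * (cst (1/4) * u 3 + cst 3 * (u 0 * u 1)) - u 0 * u 1"
      unfolding Q_def df3 bi db2 by simp
    also have "\<dots> = cst (1/12) * u 3"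
    proof -
      have t: "cst (1/3) * 3 = (1::poly\<A>)" using cst_mult[of "1/3" 3] by simp
      show ?thesis by (simp add: distrib_left mult.assoc[symmetric] cst_mult t)
    qed
    finally show ?thesis .
  qed
  have Qge: "in_A_ge2 (Q d k)" for k
  proof -
    define r where "r = bsh d (Suc k) - cst (Cf (Suc k)) * u 0 ^ Suc k"
    have r1: "ge 1 r" unfolding r_def by (rule bsh_low[OF dd d_u])
    have dA: "d (cst (Cf (Suc k)) * u 0 ^ Suc k) = cst (Cf (Suc k) * of_nat (Suc k)) * (u 0 ^ k * u 1)"
    proof -
      have "d (cst (Cf (Suc k)) * u 0 ^ Suc k) = cst (Cf (Suc k)) * (of_nat (Suc k) * u 0 ^ k * u 1)"
        by (simp only: der.cmul[OF dd] der.power[OF dd] d_u One_nat_def)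
      also have "\<dots> = cst (Cf (Suc k) * of_nat (Suc k)) * (u 0 ^ k * u 1)"
        by (simp only: cst_mult[symmetric] cst_of_nat mult.assoc)
      finally show ?thesis .
    qed
    have coef: "1 / c k * (Cf (Suc k) * of_nat (Suc k)) = 1 / of_nat (fact k)"
    proof -
      have f: "(of_nat (fact (Suc k)) :: rat) = of_nat (Suc k) * of_nat (fact k)"
        by (simp only: fact_Suc of_nat_mult) simp
      have f0: "(of_nat (fact k) :: rat) \<noteq> 0" by simp
      have s0: "(of_nat (Suc k) :: rat) \<noteq> 0" by (simp only: of_nat_eq_0_iff)
      show ?thesis using c0[of k] f0 s0 unfolding Cf_closed c_def[symmetric] f
        by (simp add: field_simps del: of_nat_Suc)
    qed
    have "Q d k = cst (1 / c k) * d (bsh d (Suc k)) - cst (1 / of_nat (fact k)) * u 0 ^ k * u 1"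
      unfolding Q_def bk c_def by simp
    also have "d (bsh d (Suc k)) = d (cst (Cf (Suc k)) * u 0 ^ Suc k) + d r"
      unfolding r_def by (simp add: der.add[OF dd] der.diff[OF dd])
    also have "cst (1 / c k) * (d (cst (Cf (Suc k)) * u 0 ^ Suc k) + d r) - cst (1 / of_nat (fact k)) * u 0 ^ k * u 1
        = cst (1 / c k) * d r"
    proof -
      have e1: "cst (1 / c k) * (cst (Cf (Suc k) * of_nat (Suc k)) * (u 0 ^ k * u 1)) = cst (1 / of_nat (fact k)) * u 0 ^ k * u 1"
        using coef by (simp only: mult.assoc[symmetric] cst_mult)
      show ?thesis unfolding dA distrib_left e1 by simp
    qed
    finally have "Q d k = cst (1 / c k) * d r" .
    moreover have "ge 2 (d r)" using d_ge[OF dd d_u r1] by (simp add: numeral_2_eq_2)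
    ultimately have "ge 2 (Q d k)" using ge_mult_left by simp
    then show ?thesis unfolding in_A_ge2_def ge_def .
  qed
  show ?thesis using comm D0 Q0 Q1 Qge by blast
qed


end
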